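(* Let $N\ge1$, let $\mathbf{K}\in\mathbb{R}^{N\times N}$ be the cyclic shift matrix ($(\mathbf{K}\mathbf{x})_1=x_N$, $(\mathbf{K}\mathbf{x})_i=x_{i-1}$ for $i\ge2$), so $\mathbf{K}^{-1}=\mathbf{K}^T$, let $\mathbf{K}(\nu)=(1-\nu)\mathbf{I}+\nu\mathbf{K}$, and $\mathbf{L}_h=N^2(\mathbf{K}+\mathbf{K}^T-2\mathbf{I})$. For $\tilde\nu\in\mathbb{R}$ with integer part $s=\lfloor\tilde\nu\rfloor$ and fractional part $\nu=\tilde\nu-s$, define $\mathcal{K}(\tilde\nu)=\mathbf{K}^s\mathbf{K}(\nu)$ (with $\mathbf{K}^s=(\mathbf{K}^T)^{-s}$ for $s<0$). Let $\tilde\nu,\tilde\omega\in\mathbb{R}$ with fractional parts $\nu=\tilde\nu-\lfloor\tilde\nu\rfloor$, $\omega=\tilde\omega-\lfloor\tilde\omega\rfloor$. Then (a) $\mathcal{K}(\tilde\nu)\mathcal{K}(\tilde\omega)=\mathcal{K}(\tilde\omega)\mathcal{K}(\tilde\nu)$; (b) $\mathcal{K}(\tilde\nu)\mathcal{K}(\tilde\omega)^T=\mathcal{K}(\tilde\omega)^T\mathcal{K}(\tilde\nu)$; (c) if $0\le\nu,\omega\le1$ and $\nu+\omega\le1$, then $\mathcal{K}(\tilde\nu)\mathcal{K}(\tilde\omega)=\mathcal{K}(\tilde\nu+\tilde\omega)+\frac{1}{N^2}\mathbf{C}$, where $\mathbf{C}$ is a scalar multiple of a shifted discrete Laplacian $\mathbf{K}^m\mathbf{L}_h$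 for some integer $m$; (d) for every $\mathbf{u}\in\mathbb{R}^N$, $\sum_{j=1}^N u_j=\sum_{j=1}^N(\mathcal{K}(\tilde\nu)\mathbf{u})_j$.
   Context: $\mathbf{I}$ is the $N\times N$ identity; $\mathcal{K}(\tilde\nu)$ is an upwind-type (large time-step) transport by a real shift $\tilde\nu$: an integer cyclic shift followed by linear interpolation between neighbouring cells. *)

theory Defs
  imports Complex_Main "Jordan_Normal_Form.Matrix"
begin

text \<open>Indices are 0-based: entries 0..N-1. The cyclic shift satisfies
  (K x)_0 = x_(N-1) and (K x)_i = x_(i-1) for i >= 1.\<close>

definition shiftK :: "nat \<Rightarrow> real mat" where
  "shiftK N = mat N N (\<lambda>(i, j). if i = (j + 1) mod N then 1 else 0)"

definition shiftK_int :: "nat \<Rightarrow> int \<Rightarrow> real mat" where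
  "shiftK_int N s = (if 0 \<le> s then shiftK N ^\<^sub>m nat s
                     else (transpose_mat (shiftK N)) ^\<^sub>m nat (- s))"

definition Knu :: "nat \<Rightarrow> real \<Rightarrow> real mat" where
  "Knu N \<nu> = (1 - \<nu>) \<cdot>\<^sub>m 1\<^sub>m N + \<nu> \<cdot>\<^sub>m shiftK N"

definition calK :: "nat \<Rightarrow> real \<Rightarrow> real mat" where
  "calK N \<nu>t = shiftK_int N \<lfloor>\<nu>t\<rfloor> * Knu N (\<nu>t - of_int \<lfloor>\<nu>t\<rfloor>)"

definition Lh :: "nat \<Rightarrow> real mat" where
  "Lh N = (real N)\<^sup>2 \<cdot>\<^sub>m (shiftK N + transpose_mat (shiftK N) - 2 \<cdot>\<^sub>m 1\<^sub>m N)"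

end

theory Submission
  imports Defs
begin

definition PP :: "nat \<Rightarrow> int \<Rightarrow> real mat" where
  "PP N a = mat N N (\<lambda>(i, j). if int i mod int N = (int j + a) mod int N then 1 else 0)"

lemma PP_carrier[simp]: "PP N a \<in> carrier_mat N N"
  by (simp add: PP_def)

lemma PP_dims[simp]: "dim_row (PP N a) = N" "dim_col (PP N a) = N"
  by (simp_all add: PP_def)

lemma PP_index: "i < N \<Longrightarrow> j < N \<Longrightarrow> PP N a $$ (i, j) = (if int i mod int N = (int j + a) mod int N then 1 else 0)"
  by (simp add: PP_def)

lemma l2: "((x::int) mod n = (y + a) mod n) = (y mod n = (x + - a) mod n)"
  by (simp add: mod_eq_dvd_iff) (metis dvd_minus_iff minus_diff_eq diff_minus_eq_add add.commute diff_diff_eq)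

lemma l3: "i < N \<Longrightarrow> (i = (j + 1) mod N) = (int i mod int N = (int j + 1) mod int N)"
proof -
  assume "i < N"
  hence "int i mod int N = int i" by simp
  moreover have "int ((j + 1) mod N) = (int j + 1) mod int N" by (simp add: zmod_int add.commute)
  ultimately show ?thesis by (metis of_nat_eq_iff)
qed

lemma PP_mult: "PP N a * PP N b = PP N (a + b)"
proof (rule eq_matI)
  fix i j assume i: "i < dim_row (PP N (a + b))" and j: "j < dim_col (PP N (a + b))"
  hence iN: "i < N" and jN: "j < N" by auto
  define k0 where "k0 = nat ((int j + b) mod int N)"
  have k0N: "k0 < N" using jN unfolding k0_def
    by (simp add: nat_less_iff)
  have k0i: "int k0 = (int j + b) mod int N" unfolding k0_def using jN by simp
  have "(PP N a * PP N b) $$ (i, j) = (\<Sum>k = 0..<N. PP N a $$ (i, k) * PP N b $$ (k, j))"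
    using iN jN by (simp add: scalar_prod_def)
  also have "\<dots> = (\<Sum>k = 0..<N. if k = k0 then PP N a $$ (i, k0) else 0)"
  proof (rule sum.cong[OF refl])
    fix k assume "k \<in> {0..<N}"
    hence kN: "k < N" by simp
    have "(int k mod int N = (int j + b) mod int N) = (k = k0)"
    proof -
      have "int k mod int N = int k" using kN by simp
      thus ?thesis using k0i by (metis of_nat_eq_iff)
    qed
    thus "PP N a $$ (i, k) * PP N b $$ (k, j) = (if k = k0 then PP N a $$ (i, k0) else 0)"
      using kN jN iN by (simp add: PP_index)
  qed
  also have "\<dots> = PP N a $$ (i, k0)" using k0N by simp
  also have "\<dots> = PP N (a + b) $$ (i, j)"
  proof -
    have "(int k0 + a) mod int N = (int j + (a + b)) mod int N"
      unfolding k0i by (simp add: mod_add_right_eq algebra_simps)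
    thus ?thesis using iN jN k0N by (simp add: PP_index)
  qed
  finally show "(PP N a * PP N b) $$ (i, j) = PP N (a + b) $$ (i, j)" .
qed auto

lemma PP_comm: "PP N a * PP N b = PP N b * PP N a"
  by (simp add: PP_mult add.commute)

lemma PP_transpose: "transpose_mat (PP N a) = PP N (- a)"
proof (rule eq_matI)
  fix i j assume "i < dim_row (PP N (- a))" "j < dim_col (PP N (- a))"
  hence iN: "i < N" and jN: "j < N" by auto
  have "(int j mod int N = (int i + a) mod int N) = (int i mod int N = (int j + - a) mod int N)"
    by (rule l2)
  thus "transpose_mat (PP N a) $$ (i, j) = PP N (- a) $$ (i, j)"
    using iN jN by (simp add: PP_index)
qed auto

lemma PP_zero: "PP N 0 = 1\<^sub>m N"
  by (rule eq_matI) (auto simp: PP_index)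

lemma shiftK_PP: "shiftK N = PP N 1"
proof (rule eq_matI)
  fix i j assume "i < dim_row (PP N 1)" "j < dim_col (PP N 1)"
  hence iN: "i < N" and jN: "j < N" by auto
  have "(i = (j + 1) mod N) = (int i mod int N = (int j + 1) mod int N)"
    using iN by (rule l3)
  thus "shiftK N $$ (i, j) = PP N 1 $$ (i, j)"
    using iN jN by (simp add: PP_index shiftK_def)
qed (auto simp: shiftK_def)

lemma PP_pow: "PP N a ^\<^sub>m n = PP N (int n * a)"
  by (induction n) (auto simp: PP_zero PP_mult algebra_simps)

lemma shiftK_int_PP: "shiftK_int N s = PP N s"
  by (auto simp: shiftK_int_def shiftK_PP PP_transpose PP_pow)

lemma lmul_comb:
  fixes M C D :: "real mat"
  assumes "M \<in> carrier_mat N N" "C \<in> carrier_mat N N" "D \<in> carrier_mat N N"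
  shows "M * (c \<cdot>\<^sub>m C + d \<cdot>\<^sub>m D) = c \<cdot>\<^sub>m (M * C) + d \<cdot>\<^sub>m (M * D)"
  using assms by (intro eq_matI) (auto simp: scalar_prod_def sum_distrib_left sum.distrib algebra_simps)

lemma rmul_comb:
  fixes M C D :: "real mat"
  assumes "M \<in> carrier_mat N N" "C \<in> carrier_mat N N" "D \<in> carrier_mat N N"
  shows "(c \<cdot>\<^sub>m C + d \<cdot>\<^sub>m D) * M = c \<cdot>\<^sub>m (C * M) + d \<cdot>\<^sub>m (D * M)"
  using assms by (intro eq_matI) (auto simp: scalar_prod_def sum_distrib_left sum.distrib algebra_simps)

lemma calK_PP: "calK N x = (1 - (x - of_int \<lfloor>x\<rfloor>)) \<cdot>\<^sub>m PP N \<lfloor>x\<rfloor> + (x - of_int \<lfloor>x\<rfloor>) \<cdot>\<^sub>m PP N (\<lfloor>x\<rfloor> + 1)"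
  unfolding calK_def Knu_def shiftK_int_PP shiftK_PP PP_zero[symmetric]
  by (simp add: lmul_comb[of _ N] PP_mult)

lemma comb_carrier[simp]: "A \<in> carrier_mat N N \<Longrightarrow> B \<in> carrier_mat N N \<Longrightarrow> x \<cdot>\<^sub>m A + y \<cdot>\<^sub>m B \<in> carrier_mat N N"
  by simp

lemma calK_carrier[simp]: "calK N x \<in> carrier_mat N N"
  unfolding calK_PP by simp

lemma comm_lin:
  fixes A B C :: "real mat"
  assumes "A \<in> carrier_mat N N" "B \<in> carrier_mat N N" "C \<in> carrier_mat N N"
    "A * C = C * A" "B * C = C * B"
  shows "(x \<cdot>\<^sub>m A + y \<cdot>\<^sub>m B) * C = C * (x \<cdot>\<^sub>m A + y \<cdot>\<^sub>m B)"
  using assms by (simp add: lmul_comb[of _ N] rmul_comb[of _ N])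

lemma transpose_comb:
  fixes A B :: "real mat"
  assumes "A \<in> carrier_mat N N" "B \<in> carrier_mat N N"
  shows "transpose_mat (x \<cdot>\<^sub>m A + y \<cdot>\<^sub>m B) = x \<cdot>\<^sub>m transpose_mat A + y \<cdot>\<^sub>m transpose_mat B"
  using assms by (intro eq_matI) auto

lemma expand:
  fixes A B C D :: "real mat"
  assumes "A \<in> carrier_mat N N" "B \<in> carrier_mat N N" "C \<in> carrier_mat N N" "D \<in> carrier_mat N N"
  shows "(a \<cdot>\<^sub>m A + b \<cdot>\<^sub>m B) * (c \<cdot>\<^sub>m C + d \<cdot>\<^sub>m D)
    = (a * c) \<cdot>\<^sub>m (A * C) + (a * d) \<cdot>\<^sub>m (A * D) + ((b * c) \<cdot>\<^sub>m (B * C) + (b * d) \<cdot>\<^sub>m (B * D))"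
  using assms by (intro eq_matI) (auto simp: scalar_prod_def sum_distrib_left sum.distrib algebra_simps)

lemma PP_colsum: "k < N \<Longrightarrow> (\<Sum>j<N. PP N a $$ (j, k)) = 1"
proof -
  assume kN: "k < N"
  define j0 where "j0 = nat ((int k + a) mod int N)"
  have j0N: "j0 < N" using kN unfolding j0_def by (simp add: nat_less_iff)
  have j0i: "int j0 = (int k + a) mod int N" unfolding j0_def using kN by simp
  have "(\<Sum>j<N. PP N a $$ (j, k)) = (\<Sum>j<N. if j = j0 then 1 else 0)"
  proof (rule sum.cong[OF refl])
    fix j assume "j \<in> {..<N}"
    hence jN: "j < N" by simp
    have "int j mod int N = int j" using jN by simp
    hence "(int j mod int N = (int k + a) mod int N) = (j = j0)" using j0i by (metis of_nat_eq_iff)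
    thus "PP N a $$ (j, k) = (if j = j0 then 1 else 0)" using jN kN by (simp add: PP_index)
  qed
  also have "\<dots> = 1" using j0N by simp
  finally show ?thesis .
qed

lemma lmul_lap:
  fixes M A B C :: "real mat"
  assumes "M \<in> carrier_mat N N" "A \<in> carrier_mat N N" "B \<in> carrier_mat N N" "C \<in> carrier_mat N N"
  shows "M * (k \<cdot>\<^sub>m (A + B - 2 \<cdot>\<^sub>m C)) = k \<cdot>\<^sub>m (M * A + M * B - 2 \<cdot>\<^sub>m (M * C))"
  using assms by (intro eq_matI) (auto simp: scalar_prod_def sum_distrib_left sum.distrib sum_subtractf algebra_simps)

lemma commX:
  fixes X :: "real mat"
  assumes X: "X \<in> carrier_mat N N" and "X * PP N t = PP N t * X" "X * PP N (t + 1) = PP N (t + 1) * X"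
  shows "X * (x \<cdot>\<^sub>m PP N t + y \<cdot>\<^sub>m PP N (t + 1)) = (x \<cdot>\<^sub>m PP N t + y \<cdot>\<^sub>m PP N (t + 1)) * X"
  using comm_lin[of "PP N t" N "PP N (t + 1)" X x y] assms by simp

lemma comb_comm:
  "(a \<cdot>\<^sub>m PP N s + b \<cdot>\<^sub>m PP N s') * (c \<cdot>\<^sub>m PP N t + d \<cdot>\<^sub>m PP N t')
   = (c \<cdot>\<^sub>m PP N t + d \<cdot>\<^sub>m PP N t') * (a \<cdot>\<^sub>m PP N s + b \<cdot>\<^sub>m PP N s')"
proof -
  have h1: "(a \<cdot>\<^sub>m PP N s + b \<cdot>\<^sub>m PP N s') * PP N t = PP N t * (a \<cdot>\<^sub>m PP N s + b \<cdot>\<^sub>m PP N s')"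
    by (rule comm_lin[of _ N]) (simp_all add: PP_comm)
  have h2: "(a \<cdot>\<^sub>m PP N s + b \<cdot>\<^sub>m PP N s') * PP N t' = PP N t' * (a \<cdot>\<^sub>m PP N s + b \<cdot>\<^sub>m PP N s')"
    by (rule comm_lin[of _ N]) (simp_all add: PP_comm)
  show ?thesis
    by (rule sym, rule comm_lin[of _ N]) (simp_all add: h1 h2)
qed

theorem lemma3p3:
  fixes N :: nat and \<nu>t \<omega>t :: real
  assumes "N \<ge> 1"
  defines "\<nu> \<equiv> \<nu>t - of_int \<lfloor>\<nu>t\<rfloor>" and "\<omega> \<equiv> \<omega>t - of_int \<lfloor>\<omega>t\<rfloor>"
  shows "calK N \<nu>t * calK N \<omega>t = calK N \<omega>t * calK N \<nu>t
    \<and> calK N \<nu>t * transpose_mat (calK N \<omega>t) = transpose_mat (calK N \<omega>t) * calK N \<nu>t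
    \<and> (0 \<le> \<nu> \<and> \<nu> \<le> 1 \<and> 0 \<le> \<omega> \<and> \<omega> \<le> 1 \<and> \<nu> + \<omega> \<le> 1 \<longrightarrow>
         (\<exists>(c::real) (m::int). calK N \<nu>t * calK N \<omega>t =
            calK N (\<nu>t + \<omega>t) + (1 / (real N)\<^sup>2) \<cdot>\<^sub>m (c \<cdot>\<^sub>m (shiftK_int N m * Lh N))))
    \<and> (\<forall>u \<in> carrier_vec N. (\<Sum>j<N. u $ j) = (\<Sum>j<N. (calK N \<nu>t *\<^sub>v u) $ j))"
proof -
  define s where "s = \<lfloor>\<nu>t\<rfloor>"
  define t where "t = \<lfloor>\<omega>t\<rfloor>"
  have X: "calK N \<nu>t = (1 - \<nu>) \<cdot>\<^sub>m PP N s + \<nu> \<cdot>\<^sub>m PP N (s + 1)"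
    unfolding calK_PP \<nu>_def s_def ..
  have Y: "calK N \<omega>t = (1 - \<omega>) \<cdot>\<^sub>m PP N t + \<omega> \<cdot>\<^sub>m PP N (t + 1)"
    unfolding calK_PP \<omega>_def t_def ..
  have YT: "transpose_mat (calK N \<omega>t) = (1 - \<omega>) \<cdot>\<^sub>m PP N (- t) + \<omega> \<cdot>\<^sub>m PP N (- (t + 1))"
    unfolding Y by (simp add: transpose_comb[of _ N] PP_transpose)
  have A: "calK N \<nu>t * calK N \<omega>t = calK N \<omega>t * calK N \<nu>t"
    unfolding X Y by (rule comb_comm)
  have B: "calK N \<nu>t * transpose_mat (calK N \<omega>t) = transpose_mat (calK N \<omega>t) * calK N \<nu>t"
    unfolding X YT by (rule comb_comm)
  have C: "\<exists>(c::real) (m::int). calK N \<nu>t * calK N \<omega>t =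
            calK N (\<nu>t + \<omega>t) + (1 / (real N)\<^sup>2) \<cdot>\<^sub>m (c \<cdot>\<^sub>m (shiftK_int N m * Lh N))"
    if h: "0 \<le> \<nu> \<and> \<nu> \<le> 1 \<and> 0 \<le> \<omega> \<and> \<omega> \<le> 1 \<and> \<nu> + \<omega> \<le> 1"
  proof -
    have n1: "\<nu> < 1" unfolding \<nu>_def by linarith
    have w1: "\<omega> < 1" unfolding \<omega>_def by linarith
    have Npos: "(real N)\<^sup>2 \<noteq> 0" using assms(1) by simp
    have sum: "\<nu>t + \<omega>t = real_of_int (s + t) + (\<nu> + \<omega>)"
      unfolding \<nu>_def \<omega>_def s_def t_def by simp
    have Lh: "shiftK_int N (s + t + 1) * Lh N = (real N)\<^sup>2 \<cdot>\<^sub>m (PP N (s + t + 2) + PP N (s + t) - 2 \<cdot>\<^sub>m PP N (s + t + 1))"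
    proof -
      have e1: "s + t + 1 + 1 = s + t + 2" "s + t + 1 + - 1 = s + t" "s + t + 1 + 0 = s + t + 1" by simp_all
      have "shiftK_int N (s + t + 1) * Lh N = PP N (s + t + 1) * ((real N)\<^sup>2 \<cdot>\<^sub>m (PP N 1 + PP N (- 1) - 2 \<cdot>\<^sub>m PP N 0))"
        unfolding Lh_def shiftK_int_PP shiftK_PP PP_transpose PP_zero ..
      also have "\<dots> = (real N)\<^sup>2 \<cdot>\<^sub>m (PP N (s + t + 1 + 1) + PP N (s + t + 1 + - 1) - 2 \<cdot>\<^sub>m PP N (s + t + 1 + 0))"
        by (simp add: lmul_lap[of _ N] PP_mult)
      finally show ?thesis unfolding e1 .
    qed
    have XY: "calK N \<nu>t * calK N \<omega>t = ((1 - \<nu>) * (1 - \<omega>)) \<cdot>\<^sub>m PP N (s + t) + ((1 - \<nu>) * \<omega>) \<cdot>\<^sub>m PP N (s + t + 1)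
       + ((\<nu> * (1 - \<omega>)) \<cdot>\<^sub>m PP N (s + t + 1) + (\<nu> * \<omega>) \<cdot>\<^sub>m PP N (s + t + 2))"
    proof -
      have e: "s + (t + 1) = s + t + 1" "s + 1 + t = s + t + 1" "s + 1 + (t + 1) = s + t + 2" by simp_all
      show ?thesis unfolding X Y by (simp add: expand[of _ N] PP_mult e)
    qed
    show ?thesis
    proof (intro exI[of _ "\<nu> * \<omega>"] exI[of _ "s + t + 1"])
      show "calK N \<nu>t * calK N \<omega>t = calK N (\<nu>t + \<omega>t) + (1 / (real N)\<^sup>2) \<cdot>\<^sub>m ((\<nu> * \<omega>) \<cdot>\<^sub>m (shiftK_int N (s + t + 1) * Lh N))"
      proof (cases "\<nu> + \<omega> < 1")
        case True
        have fl: "\<lfloor>\<nu>t + \<omega>t\<rfloor> = s + t" unfolding sum using h True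
          by (simp add: floor_eq_iff)
        have R: "calK N (\<nu>t + \<omega>t) = (1 - (\<nu> + \<omega>)) \<cdot>\<^sub>m PP N (s + t) + (\<nu> + \<omega>) \<cdot>\<^sub>m PP N (s + t + 1)"
          unfolding calK_PP fl by (simp add: sum)
        show ?thesis unfolding XY R Lh
          by (rule eq_matI) (auto simp: Npos algebra_simps)
      next
        case False
        hence eq: "\<nu> + \<omega> = 1" using h by simp
        have fl: "\<lfloor>\<nu>t + \<omega>t\<rfloor> = s + t + 1" unfolding sum eq by simp
        have R: "calK N (\<nu>t + \<omega>t) = (1 - 0) \<cdot>\<^sub>m PP N (s + t + 1) + 0 \<cdot>\<^sub>m PP N (s + t + 1 + 1)"
          unfolding calK_PP fl by (simp add: sum eq)
        have w: "\<omega> = 1 - \<nu>" using eq by simp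
        show ?thesis unfolding XY R Lh w
          by (rule eq_matI) (auto simp: Npos algebra_simps)
      qed
    qed
  qed
  have D: "(\<Sum>j<N. u $ j) = (\<Sum>j<N. (calK N \<nu>t *\<^sub>v u) $ j)" if u: "u \<in> carrier_vec N" for u
  proof -
    have "(\<Sum>j<N. (calK N \<nu>t *\<^sub>v u) $ j) = (\<Sum>j<N. \<Sum>k<N. calK N \<nu>t $$ (j, k) * u $ k)"
    proof -
      have d: "dim_row (calK N \<nu>t) = N" "dim_col (calK N \<nu>t) = N"
        using carrier_matD[OF calK_carrier[of N \<nu>t]] by auto
      show ?thesis using u d by (auto simp: scalar_prod_def lessThan_atLeast0 intro!: sum.cong)
    qed
    also have "\<dots> = (\<Sum>k<N. (\<Sum>j<N. calK N \<nu>t $$ (j, k)) * u $ k)"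
      by (subst sum.swap) (simp add: sum_distrib_right)
    also have "\<dots> = (\<Sum>k<N. u $ k)"
    proof (rule sum.cong[OF refl])
      fix k assume "k \<in> {..<N}"
      hence kN: "k < N" by simp
      have "(\<Sum>j<N. calK N \<nu>t $$ (j, k)) = (\<Sum>j<N. (1 - \<nu>) * PP N s $$ (j, k) + \<nu> * PP N (s + 1) $$ (j, k))"
        using kN unfolding X by (intro sum.cong) auto
      also have "\<dots> = 1" using kN by (simp add: sum.distrib sum_distrib_left[symmetric] PP_colsum)
      finally show "(\<Sum>j<N. calK N \<nu>t $$ (j, k)) * u $ k = u $ k" by simp
    qed
    finally show ?thesis by simp
  qed
  show ?thesis using A B C D by blast
qed

end
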